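(* The map $R:[0,1]\to[0,1]$ is continuous at every point of $[0,1]\setminus(\mathscr D\setminus\{1\})$, and at every point of $\mathscr D\setminus\{1\}$ it is left-continuous but not continuous. Hence $R$ is a Borel function of Baire class $1$, i.e. a pointwise limit of continuous functions.
   Context: Define $\rho$ on binary words: for $b=b_1b_2\dots$, $\rho(b)$ is obtained by deleting every digit $b_n=0$ and replacing every $b_n=1$ by $0$ if $n$ is odd and by $1$ if $n$ is even. Let $\mathscr C$ be the set of infinite binary sequences with infinitely many $1$'s; for $x\in(0,1]$ let $\beta(x)\in\mathscr C$ be the unique binary expansion of $x$ with infinitely many $1$'s, i.e. $x=\sum_n\beta(x)_n2^{-n}$. Define $R:[0,1]\to[0,1]$ by $R(0)=2/3$ and, for $x\in(0,1]$, $R(x)=\sum_{n\ge1}c_n2^{-n}$ where $c=\rho(\beta(x))$ (an infinite binary sequence). $\mathscr D$ denotes the set of dyadic rationals in $[0,1]$. *)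

theory Defs
  imports "HOL-Analysis.Analysis" "HOL-Library.Infinite_Set"
begin

text \<open>Binary sequences are functions nat => bool, indexed from 0: entry b k is the
  digit b_(k+1) of the paper (True = 1, False = 0).\<close>

definition beta :: "real \<Rightarrow> (nat \<Rightarrow> bool)" where
  "beta x = (THE b. infinite {n. b n} \<and> x = (\<Sum>n. of_bool (b n) / 2 ^ Suc n))"

text \<open>The map rho on sequences with infinitely many 1's: delete the 0-digits and replace
  the 1 at (1-based) position n by 0 if n is odd and by 1 if n is even. The k-th 1 of b
  sits at 0-based index enumerate {n. b n} k, i.e. 1-based position that index + 1,
  which is even iff the 0-based index is odd.\<close>
definition rho :: "(nat \<Rightarrow> bool) \<Rightarrow> (nat \<Rightarrow> bool)" where
  "rho b = (\<lambda>k. odd (enumerate {n. b n} k))"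

definition R :: "real \<Rightarrow> real" where
  "R x = (if x = 0 then 2/3 else (\<Sum>k. of_bool (rho (beta x) k) / 2 ^ Suc k))"

definition dyadics :: "real set" where
  "dyadics = {x. (\<exists>m n::nat. x = real m / 2 ^ n) \<and> 0 \<le> x \<and> x \<le> 1}"

end

theory Submission
  imports Defs
begin


definition val :: "(nat \<Rightarrow> bool) \<Rightarrow> real" where
  "val c = (\<Sum>k. of_bool (c k) / 2 ^ Suc k)"

lemma geo_tail: "(\<Sum>n. (1::real) / 2 ^ Suc (n + M)) = 1 / 2 ^ M"
  and geo_tail_summable: "summable (\<lambda>n. (1::real) / 2 ^ Suc (n + M))"
proof -
  have e: "(\<lambda>n. (1::real) / 2 ^ Suc (n + M)) = (\<lambda>n. (1 / 2 ^ Suc M) * (1/2) ^ n)"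
    by (auto simp: power_add power_divide field_simps)
  have s: "summable (\<lambda>n. (1/2::real) ^ n)" by (rule summable_geometric) simp
  show "summable (\<lambda>n. (1::real) / 2 ^ Suc (n + M))" unfolding e
    by (intro summable_mult s)
  show "(\<Sum>n. (1::real) / 2 ^ Suc (n + M)) = 1 / 2 ^ M" unfolding e
    by (subst suminf_mult[OF s]) (simp add: suminf_geometric)
qed

lemma val_summable: "summable (\<lambda>k. of_bool (c k) / (2::real) ^ Suc k)"
  by (rule summable_comparison_test'[OF geo_tail_summable[of 0]]) auto

definition dh :: "(nat \<Rightarrow> bool) \<Rightarrow> (nat \<Rightarrow> bool) \<Rightarrow> nat \<Rightarrow> real" where
  "dh c c' k = of_bool (c k) / 2 ^ Suc k - of_bool (c' k) / 2 ^ Suc k"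

lemma hd_summable: "summable (dh c c')"
  unfolding dh_def by (intro summable_diff val_summable)

lemma val_diff: "val c - val c' = (\<Sum>n. dh c c' (n + M)) + (\<Sum>i<M. dh c c' i)"
proof -
  have "val c - val c' = suminf (dh c c')"
    unfolding val_def dh_def using suminf_diff[OF val_summable[of c] val_summable[of c']] by simp
  also have "\<dots> = (\<Sum>n. dh c c' (n + M)) + (\<Sum>i<M. dh c c' i)"
    by (rule suminf_split_initial_segment[OF hd_summable])
  finally show ?thesis .
qed

lemma hd_tail: "\<bar>\<Sum>n. dh c c' (n + M)\<bar> \<le> 1 / 2 ^ M"
proof -
  have s: "summable (\<lambda>n. dh c c' (n + M))"
    using hd_summable by (simp add: summable_iff_shift)
  have b: "norm (dh c c' (n + M)) \<le> 1 / 2 ^ Suc (n + M)" for n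
    unfolding dh_def by (auto simp: field_simps)
  have sa: "summable (\<lambda>n. \<bar>dh c c' (n + M)\<bar>)"
    by (rule summable_comparison_test'[OF geo_tail_summable[of M]]) (use b in auto)
  have "\<bar>\<Sum>n. dh c c' (n + M)\<bar> \<le> (\<Sum>n. \<bar>dh c c' (n + M)\<bar>)"
    by (rule summable_rabs[OF sa])
  also have "\<dots> \<le> (\<Sum>n. 1 / 2 ^ Suc (n + M))"
    by (rule suminf_le[OF _ sa geo_tail_summable]) (use b in auto)
  finally have "norm (\<Sum>n. dh c c' (n + M)) \<le> (\<Sum>n. 1 / 2 ^ Suc (n + M))" by simp
  then show ?thesis using geo_tail[of M] by simp
qed

lemma val_close:
  assumes "\<And>k. k < K \<Longrightarrow> c k = c' k"
  shows "\<bar>val c - val c'\<bar> \<le> 1 / 2 ^ K"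
proof -
  have "(\<Sum>i<K. dh c c' i) = 0" using assms by (auto simp: dh_def intro!: sum.neutral)
  then show ?thesis using val_diff[of c c' K] hd_tail[of c c' K] by simp
qed

lemma val_gap:
  assumes "\<And>k. k < K \<Longrightarrow> c k = c' k" "c K" "\<not> c' K" "c (K+2) \<or> \<not> c' (K+2)"
  shows "val c - val c' \<ge> 1 / 2 ^ (K+3)"
proof -
  have "(\<Sum>i<K+3. dh c c' i) = (\<Sum>i<K. dh c c' i) + dh c c' K + dh c c' (K+1) + dh c c' (K+2)"
    by (simp add: numeral_3_eq_3 add.assoc)
  also have "(\<Sum>i<K. dh c c' i) = 0" using assms by (auto simp: dh_def intro!: sum.neutral)
  finally have e: "(\<Sum>i<K+3. dh c c' i) = dh c c' K + dh c c' (K+1) + dh c c' (K+2)" by simp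
  have h0: "dh c c' K = 1 / 2 ^ Suc K" using assms by (simp add: dh_def)
  have h1: "dh c c' (K+1) \<ge> - (1 / 2 ^ (K+2))" by (auto simp: dh_def)
  have h2: "dh c c' (K+2) \<ge> 0" using assms(4) by (auto simp: dh_def)
  have t: "(\<Sum>n. dh c c' (n + (K+3))) \<ge> - (1 / 2 ^ (K+3))" using hd_tail[of c c' "K+3"] by linarith
  have "val c - val c' \<ge> 1 / 2 ^ Suc K - 1 / 2 ^ (K+2) - 1 / 2 ^ (K+3)"
    using val_diff[of c c' "K+3"] e h0 h1 h2 t by linarith
  moreover have "1 / 2 ^ Suc K - 1 / 2 ^ (K+2) - 1 / 2 ^ (K+3) = (1::real) / 2 ^ (K+3)"
    by (simp add: field_simps power_add)
  ultimately show ?thesis by simp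
qed



lemma enum_card:
  fixes S :: "nat set"
  assumes "infinite S"
  shows "card {m\<in>S. m < enumerate S k} = k"
proof -
  have "{m\<in>S. m < enumerate S k} = enumerate S ` {..<k}"
  proof
    show "{m\<in>S. m < enumerate S k} \<subseteq> enumerate S ` {..<k}"
    proof
      fix m assume "m \<in> {m\<in>S. m < enumerate S k}"
      then obtain j where "enumerate S j = m" "m < enumerate S k"
        using enumerate_Ex[OF assms] by blast
      then show "m \<in> enumerate S ` {..<k}" using assms by auto
    qed
    show "enumerate S ` {..<k} \<subseteq> {m\<in>S. m < enumerate S k}"
      using assms by (auto intro: enumerate_in_set)
  qed
  moreover have "inj_on (enumerate S) {..<k}"
    using inj_enumerate[OF assms] by (meson inj_on_subset subset_UNIV)
  ultimately show ?thesis by (simp add: card_image)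
qed

lemma enum_eq:
  fixes S :: "nat set"
  assumes "infinite S" "n \<in> S" "card {m\<in>S. m < n} = k"
  shows "enumerate S k = n"
proof -
  obtain j where j: "enumerate S j = n" using enumerate_Ex[OF assms(1,2)] by blast
  then have "card {m\<in>S. m < n} = j" using enum_card[OF assms(1), of j] by simp
  then show ?thesis using j assms(3) by simp
qed

lemma enum_prefix:
  fixes b b' :: "nat \<Rightarrow> bool"
  assumes "infinite {n. b n}" "infinite {n. b' n}" "\<And>n. n < M \<Longrightarrow> b n = b' n"
    "enumerate {n. b n} k < M"
  shows "enumerate {n. b' n} k = enumerate {n. b n} k"
proof (rule enum_eq[OF assms(2)])
  let ?e = "enumerate {n. b n} k"
  have "?e \<in> {n. b n}" using enumerate_in_set[OF assms(1)] .
  then show "?e \<in> {n. b' n}" using assms(3,4) by auto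
  have "{m\<in>{n. b' n}. m < ?e} = {m\<in>{n. b n}. m < ?e}" using assms(3,4) by auto
  then show "card {m\<in>{n. b' n}. m < ?e} = k" using enum_card[OF assms(1)] by simp
qed

lemma rho_prefix:
  fixes b b' :: "nat \<Rightarrow> bool"
  assumes "infinite {n. b n}" "infinite {n. b' n}" "\<And>n. n < M \<Longrightarrow> b n = b' n"
    "enumerate {n. b n} K < M" "k \<le> K"
  shows "rho b' k = rho b k"
proof -
  have "enumerate {n. b n} k \<le> enumerate {n. b n} K" using assms(1,5) by simp
  then show ?thesis unfolding rho_def using enum_prefix[OF assms(1-3)] assms(4) by simp
qed

definition bd :: "real \<Rightarrow> nat \<Rightarrow> bool" where
  "bd x n = even \<lceil>2 ^ Suc n * x\<rceil>"

fun A :: "(nat \<Rightarrow> bool) \<Rightarrow> nat \<Rightarrow> int" where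
  "A b 0 = 0"
| "A b (Suc n) = 2 * A b n + of_bool (b n)"

lemma A_real: "real_of_int (A b n) = 2 ^ n * (\<Sum>k<n. of_bool (b k) / 2 ^ Suc k)"
  by (induction n) (auto simp: field_simps)

lemma val_split: "val b = (\<Sum>k<n. of_bool (b k) / 2 ^ Suc k) + (\<Sum>j. of_bool (b (j + n)) / 2 ^ Suc (j + n))"
  unfolding val_def using suminf_split_initial_segment[OF val_summable[of b], of n] by simp

lemma tail_le: "(\<Sum>j. of_bool (b (j + n)) / (2::real) ^ Suc (j + n)) \<le> 1 / 2 ^ n"
proof -
  have s: "summable (\<lambda>j. of_bool (b (j + n)) / (2::real) ^ Suc (j + n))"
    using summable_iff_shift[of "\<lambda>k. of_bool (b k) / (2::real) ^ Suc k" n] val_summable[of b] by simp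
  have "(\<Sum>j. of_bool (b (j + n)) / (2::real) ^ Suc (j + n)) \<le> (\<Sum>j. 1 / 2 ^ Suc (j + n))"
    by (rule suminf_le[OF _ s geo_tail_summable]) auto
  then show ?thesis using geo_tail[of n] by simp
qed

lemma unique_digits:
  assumes inf: "infinite {n. b n}" and x: "x = val b"
  shows "\<lceil>2 ^ n * x\<rceil> = A b n + 1"
proof -
  let ?T = "\<Sum>j. of_bool (b (j + n)) / (2::real) ^ Suc (j + n)"
  have s: "summable (\<lambda>j. of_bool (b (j + n)) / (2::real) ^ Suc (j + n))"
    using summable_iff_shift[of "\<lambda>k. of_bool (b k) / (2::real) ^ Suc k" n] val_summable[of b] by simp
  obtain m where m: "n \<le> m" "b m" using inf by (meson infinite_nat_iff_unbounded_le mem_Collect_eq)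
  have "0 < ?T"
    by (rule suminf_pos2[OF s, of "m - n"]) (use m in auto)
  moreover have "?T \<le> 1 / 2 ^ n" by (rule tail_le)
  moreover have "2 ^ n * x = A b n + 2 ^ n * ?T"
    using val_split[of b n] x A_real[of b n] by (simp add: field_simps)
  ultimately have "A b n < 2 ^ n * x" "2 ^ n * x \<le> A b n + 1"
    by (auto simp: field_simps)
  then show ?thesis by (intro ceiling_unique) auto
qed

lemma unique_bd:
  assumes inf: "infinite {n. b n}" and x: "x = val b"
  shows "b = bd x"
proof
  fix n
  have "\<lceil>2 ^ Suc n * x\<rceil> = 2 * A b n + of_bool (b n) + 1"
    using unique_digits[OF assms, of "Suc n"] by simp
  then show "b n = bd x n" unfolding bd_def by auto
qed

lemma bd_A:
  assumes "0 < x" "x \<le> 1"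
  shows "A (bd x) n = \<lceil>2 ^ n * x\<rceil> - 1"
proof (induction n)
  case 0
  then show ?case using assms by (simp add: ceiling_unique)
next
  case (Suc n)
  define c where "c = \<lceil>2 ^ n * x\<rceil>"
  define c' where "c' = \<lceil>2 ^ Suc n * x\<rceil>"
  have "c - 1 < 2 ^ n * x" "2 ^ n * x \<le> c" unfolding c_def by linarith+
  then have "2 * c - 2 < 2 ^ Suc n * x" "2 ^ Suc n * x \<le> 2 * c" by auto
  then have "c' = 2 * c \<or> c' = 2 * c - 1" unfolding c'_def by linarith
  moreover have "bd x n \<longleftrightarrow> even c'" by (simp add: bd_def c'_def)
  moreover have "A (bd x) (Suc n) = 2 * A (bd x) n + of_bool (bd x n)" by simp
  ultimately show ?case using Suc unfolding c_def[symmetric] c'_def[symmetric]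
    by auto
qed


lemma bd_val:
  assumes "0 < x" "x \<le> 1"
  shows "val (bd x) = x" "infinite {n. bd x n}"
proof -
  let ?P = "\<lambda>n. (\<Sum>k<n. of_bool (bd x k) / (2::real) ^ Suc k)"
  have P0: "?P n = real_of_int (A (bd x) n) / 2^n" for n
    by (simp add: A_real)
  have P: "?P n = (real_of_int \<lceil>2 ^ n * x\<rceil> - 1) / 2 ^ n" for n
    unfolding P0 bd_A[OF assms] by simp
  have lo: "x - 1 / 2 ^ n \<le> ?P n" and hi: "?P n < x" for n
  proof -
    have a: "2 ^ n * x \<le> \<lceil>2 ^ n * x\<rceil>" "\<lceil>2 ^ n * x\<rceil> < 2 ^ n * x + 1" by linarith+
    have p: "(0::real) < 2 ^ n" by simp
    have "x - 1 / 2 ^ n = (2 ^ n * x - 1) / 2 ^ n" using p by (simp add: diff_divide_distrib)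
    also have "\<dots> \<le> (real_of_int \<lceil>2 ^ n * x\<rceil> - 1) / 2 ^ n"
      by (intro divide_right_mono) (use a in auto)
    finally show "x - 1 / 2 ^ n \<le> ?P n" unfolding P .
    have "(real_of_int \<lceil>2 ^ n * x\<rceil> - 1) / 2 ^ n < (2 ^ n * x) / 2 ^ n"
      by (intro divide_strict_right_mono) (use a in auto)
    then show "?P n < x" unfolding P using p by simp
  qed
  have "(\<lambda>n. x - 1 / 2 ^ n) \<longlonglongrightarrow> x - 0"
    by (intro tendsto_diff tendsto_const LIMSEQ_divide_realpow_zero) auto
  then have l: "(\<lambda>n. x - 1 / 2 ^ n) \<longlonglongrightarrow> x" by simp
  have "?P \<longlonglongrightarrow> x"
    by (rule tendsto_sandwich[OF _ _ l tendsto_const]) (use lo hi in \<open>auto intro!: always_eventually less_imp_le\<close>)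
  then have "(\<lambda>k. of_bool (bd x k) / (2::real) ^ Suc k) sums x" by (simp add: sums_def)
  then show v: "val (bd x) = x" unfolding val_def by (simp add: sums_iff)
  show "infinite {n. bd x n}"
  proof
    assume "finite {n. bd x n}"
    then obtain N where N0: "\<forall>n\<in>{n. bd x n}. n < N" using finite_nat_set_iff_bounded by blast
    then have N: "\<And>j. \<not> bd x (j + N)" by force
    have "(\<Sum>j. of_bool (bd x (j + N)) / (2::real) ^ Suc (j + N)) = 0" by (simp only: N) simp
    then have "val (bd x) = ?P N" using val_split[of "bd x" N] by simp
    then show False using v hi[of N] by simp
  qed
qed

lemma beta_eq:
  assumes "0 < x" "x \<le> 1"
  shows "beta x = bd x"
  unfolding beta_def
proof (rule the_equality)
  show "infinite {n. bd x n} \<and> x = (\<Sum>n. of_bool (bd x n) / 2 ^ Suc n)"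
    using bd_val[OF assms] by (simp add: val_def)
  fix b assume "infinite {n. b n} \<and> x = (\<Sum>n. of_bool (b n) / 2 ^ Suc n)"
  then show "b = bd x" using unique_bd[of b x] by (simp add: val_def)
qed

lemma R_val: "0 < x \<Longrightarrow> x \<le> 1 \<Longrightarrow> R x = val (rho (bd x))"
  unfolding R_def val_def using beta_eq by simp



lemma level_ev:
  fixes x :: real
  assumes "(\<forall>y\<in>S. y \<le> x) \<or> (\<forall>i::int. 2^n * x \<noteq> i)"
  shows "eventually (\<lambda>y. \<lceil>2^n * y\<rceil> = \<lceil>2^n * x\<rceil>) (at x within S)"
proof -
  define c where "c = \<lceil>2^n * x\<rceil>"
  have p: "(0::real) < 2^n" by simp
  have c1: "c - 1 < 2^n * x" "2^n * x \<le> c" unfolding c_def by linarith+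
  define d1 where "d1 = x - (c - 1) / 2^n"
  have d1: "d1 > 0" using c1 p unfolding d1_def by (simp add: field_simps)
  have lo: "of_int c - 1 < 2^n * y" if "dist y x < d1" for y :: real
  proof -
    have "(c - 1) / 2^n < y" using that unfolding d1_def dist_real_def by linarith
    then show ?thesis using p by (simp add: field_simps)
  qed
  from assms show ?thesis
  proof
    assume le: "\<forall>y\<in>S. y \<le> x"
    show ?thesis unfolding eventually_at
    proof (intro exI[of _ d1] conjI ballI impI d1)
      fix y assume "y \<in> S" "y \<noteq> x \<and> dist y x < d1"
      then have "c - 1 < 2^n * y" "2^n * y \<le> c" using lo le c1 p
        by (auto intro: order.trans[OF mult_left_mono])
      then show "\<lceil>2^n * y\<rceil> = \<lceil>2^n * x\<rceil>" unfolding c_def[symmetric] by (intro ceiling_unique) auto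
    qed
  next
    assume ni: "\<forall>i::int. 2^n * x \<noteq> i"
    then have "2^n * x \<noteq> of_int c" by blast
    then have "2^n * x < c" using c1 by linarith
    define d2 where "d2 = c / 2^n - x"
    have d2: "d2 > 0" using \<open>2^n * x < c\<close> p unfolding d2_def by (simp add: field_simps)
    show ?thesis unfolding eventually_at
    proof (intro exI[of _ "min d1 d2"] conjI ballI impI)
      show "min d1 d2 > 0" using d1 d2 by simp
      fix y assume "y \<in> S" "y \<noteq> x \<and> dist y x < min d1 d2"
      then have "dist y x < d1" "dist y x < d2" by auto
      then have "c - 1 < 2^n * y" "y < c / 2^n" using lo unfolding d2_def dist_real_def by auto
      then have "c - 1 < 2^n * y" "2^n * y \<le> c" using p by (auto simp: field_simps)
      then show "\<lceil>2^n * y\<rceil> = \<lceil>2^n * x\<rceil>" unfolding c_def[symmetric] by (intro ceiling_unique) auto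
    qed
  qed
qed

lemma R_cont:
  fixes x :: real
  assumes x: "0 < x" "x \<le> 1" and S: "S \<subseteq> {0..1}"
    and cond: "(\<forall>y\<in>S. y \<le> x) \<or> (\<forall>n::nat. \<forall>i::int. 2^n * x \<noteq> i)"
  shows "continuous (at x within S) R"
  unfolding continuous_within tendsto_iff
proof (intro allI impI)
  fix e :: real assume e: "e > 0"
  obtain K where K: "(1/2::real)^K < e" using real_arch_pow_inv[OF e, of "1/2"] by auto
  define M where "M = enumerate {n. bd x n} K"
  have infx: "infinite {n. bd x n}" using bd_val[OF x] by simp
  have ev1: "eventually (\<lambda>y. \<forall>l\<in>{..Suc M}. \<lceil>2^l * y\<rceil> = \<lceil>2^l * x\<rceil>) (at x within S)"
    by (intro eventually_ball_finite ballI level_ev) (use cond in auto)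
  have ev2: "eventually (\<lambda>y. 0 < y \<and> y \<in> S) (at x within S)"
    unfolding eventually_at by (intro exI[of _ x]) (auto simp: dist_real_def x)
  show "eventually (\<lambda>y. dist (R y) (R x) < e) (at x within S)"
    using ev1 ev2
  proof eventually_elim
    case (elim y)
    then have y: "0 < y" "y \<le> 1" using S by auto
    have infy: "infinite {n. bd y n}" using bd_val[OF y] by simp
    have agree: "bd x n = bd y n" if "n < Suc M" for n
    proof -
      have "Suc n \<in> {..Suc M}" using that by simp
      then have "\<lceil>2^Suc n * y\<rceil> = \<lceil>2^Suc n * x\<rceil>" using elim(1) by blast
      then show ?thesis unfolding bd_def by simp
    qed
    have "rho (bd y) k = rho (bd x) k" if "k < Suc K" for k
      by (rule rho_prefix[where M="Suc M" and K=K, OF infx infy agree]) (use that in \<open>auto simp: M_def\<close>)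
    then have "\<bar>val (rho (bd y)) - val (rho (bd x))\<bar> \<le> 1 / 2 ^ Suc K"
      by (intro val_close) auto
    also have "\<dots> < e" proof -
      have "(1::real) / 2 ^ Suc K \<le> 1 / 2 ^ K" by (simp add: field_simps)
      then show ?thesis using K by (simp add: power_divide)
    qed
    finally show ?case using R_val[OF y] R_val[OF x] by (simp add: dist_real_def)
  qed
qed



lemma cont_eps:
  assumes "continuous (at x within S) (f :: real \<Rightarrow> real)" "e > 0"
  shows "\<exists>d>0. \<forall>y\<in>S. dist y x < d \<longrightarrow> dist (f y) (f x) < e"
proof -
  have "eventually (\<lambda>y. dist (f y) (f x) < e) (at x within S)"
    using assms unfolding continuous_within tendsto_iff by blast
  then obtain d where d: "d > 0" "\<forall>y\<in>S. y \<noteq> x \<and> dist y x < d \<longrightarrow> dist (f y) (f x) < e"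
    unfolding eventually_at by blast
  show ?thesis using d assms(2) by (intro exI[of _ d]) (metis dist_self)
qed

lemma bd_pow:
  assumes "x = 1 / 2 ^ k"
  shows "bd x n \<longleftrightarrow> k \<le> n"
proof (cases "k \<le> n")
  case True
  then obtain i where i: "n = k + i" using le_Suc_ex by blast
  have eq: "2 ^ Suc n * x = of_int (2 * 2 ^ i)" using assms i by (simp add: power_add)
  have c: "\<lceil>2 ^ Suc n * x\<rceil> = 2 * 2 ^ i" by (simp only: eq ceiling_of_int)
  show ?thesis unfolding bd_def c using True by simp
next
  case False
  then have "Suc n \<le> k" by simp
  then obtain i where i: "k = Suc n + i" using le_Suc_ex by blast
  have "2 ^ Suc n * x = 1 / 2 ^ i" using assms i by (simp add: power_add)
  moreover have "\<lceil>(1::real) / 2 ^ i\<rceil> = 1"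
    by (rule ceiling_unique) auto
  ultimately show ?thesis unfolding bd_def using False by simp
qed

lemma R_pow_small:
  assumes "even k"
  shows "R (1 / 2 ^ k) \<le> 3 / 8"
proof -
  define y :: real where "y = 1 / 2 ^ k"
  have y: "0 < y" "y \<le> 1" unfolding y_def by (auto simp: field_simps)
  have S: "{n. bd y n} = {k..}" using bd_pow[OF y_def] by auto
  have enum: "enumerate {n. bd y n} j = k + j" for j
  proof -
    have "{m \<in> {k..}. m < k + j} = {k..<k+j}" by auto
    then have c: "card {m \<in> {k..}. m < k + j} = j" by simp
    have inf: "infinite {k::nat..}" using infinite_Ici by blast
    show ?thesis unfolding S by (rule enum_eq[OF inf _ c]) simp
  qed
  have r0: "\<not> rho (bd y) 0" and r2: "\<not> rho (bd y) 2" unfolding rho_def enum using assms by auto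
  have g: "val (\<lambda>j. j = 0) - val (rho (bd y)) \<ge> 1 / 2 ^ (0+3)"
    by (rule val_gap) (use r0 r2 in \<open>auto simp: numeral_2_eq_2\<close>)
  have fe: "(\<lambda>j. of_bool (j = (0::nat)) / (2::real) ^ Suc j) = (\<lambda>j. if j = 0 then (\<lambda>_. 1/2::real) j else 0)"
    by (auto simp: fun_eq_iff)
  have "(\<lambda>j. of_bool (j = (0::nat)) / (2::real) ^ Suc j) sums (1/2)"
    unfolding fe by (rule sums_single)
  then have "val (\<lambda>j. j = 0) = 1/2" unfolding val_def by (simp add: sums_iff)
  then show ?thesis using g R_val[OF y] unfolding y_def by simp
qed

lemma R_discont0: "\<not> continuous (at 0 within {0..1}) R"
proof
  assume "continuous (at 0 within {0..1}) R"
  from cont_eps[OF this, of "1/4"] obtain d where d: "d > 0"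
    "\<forall>y\<in>{0..1}. dist y 0 < d \<longrightarrow> dist (R y) (R 0) < 1/4" by auto
  obtain j where j: "(1/4::real)^j < d" using real_arch_pow_inv[OF d(1), of "1/4"] by auto
  have e: "(1/4::real)^j = 1 / 2 ^ (2*j)" by (simp add: power_mult power_divide)
  have "R (1 / 2 ^ (2*j)) \<le> 3/8" by (rule R_pow_small) simp
  moreover have "dist (R (1 / 2 ^ (2*j))) (R 0) < 1/4"
  proof -
    have "(1::real) / 2 ^ (2*j) \<in> {0..1}" by simp
    moreover have "dist ((1::real) / 2 ^ (2*j)) 0 < d" using j e by simp
    ultimately show ?thesis using d(2) by blast
  qed
  ultimately show False by (simp add: R_def dist_real_def)
qed



lemma odd_rep:
  assumes "d = real m / 2 ^ n" "0 < d" "d \<le> 1"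
  shows "\<exists>m' N. odd m' \<and> d = real m' / 2 ^ N"
  using assms
proof (induction n arbitrary: m)
  case 0
  then have "m = 1" by simp
  then show ?case using 0 by (intro exI[of _ 1] exI[of _ 0]) simp
next
  case (Suc n)
  show ?case
  proof (cases "odd m")
    case True
    then show ?thesis using Suc.prems by blast
  next
    case False
    then obtain k where k: "m = 2 * k" by blast
    have "d = real k / 2 ^ n" using Suc.prems(1) k by simp
    then show ?thesis using Suc.IH Suc.prems by blast
  qed
qed

lemma R_discont:
  assumes d: "0 < d" "d < 1" and dm: "d = real m / 2 ^ N" and m: "odd m"
  shows "\<not> continuous (at d within {0..1}) R"
proof
  assume cont: "continuous (at d within {0..1}) R"
  have "N \<noteq> 0"
  proof
    assume "N = 0"
    then have "d = real m" using dm by simp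
    moreover have "m \<noteq> 0" using m by presburger
    ultimately show False using d by simp
  qed
  then obtain N0 where N0: "N = Suc N0" using not0_implies_Suc by blast
  have p: "(0::real) < 2 ^ N" by simp
  have dN: "2 ^ N * d = real m" using dm by simp
  have d1: "0 < d" "d \<le> 1" using d by auto
  have infd: "infinite {n. bd d n}" using bd_val[OF d1] by simp
  have nbN0: "\<not> bd d N0"
  proof -
    have "\<lceil>2 ^ Suc N0 * d\<rceil> = int m" using dN N0 by simp
    then show ?thesis unfolding bd_def using m by simp
  qed
  have bdN: "bd d (N + i)" for i
  proof -
    have "2 ^ Suc (N + i) * d = of_int (2 * 2 ^ i * int m)"
      using dN by (simp add: power_add algebra_simps)
    then have "\<lceil>2 ^ Suc (N + i) * d\<rceil> = 2 * 2 ^ i * int m" by (simp only: ceiling_of_int)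
    then show ?thesis unfolding bd_def by simp
  qed
  define K where "K = card {j \<in> {n. bd d n}. j < N}"
  have eK: "enumerate {n. bd d n} K = N"
    by (rule enum_eq[OF infd]) (use bdN[of 0] in \<open>auto simp: K_def\<close>)
  have eK2: "enumerate {n. bd d n} (K + 2) = N + 2"
  proof (rule enum_eq[OF infd])
    show "N + 2 \<in> {n. bd d n}" using bdN[of 2] by simp
    have "{j \<in> {n. bd d n}. j < N + 2} = insert N (insert (N+1) {j \<in> {n. bd d n}. j < N})"
      using bdN[of 0] bdN[of 1] by auto
    then show "card {j \<in> {n. bd d n}. j < N + 2} = K + 2" unfolding K_def by simp
  qed
  define eta :: real where "eta = 1 / 2 ^ (K + 3)"
  have eta: "eta > 0" unfolding eta_def by simp
  have ni: "\<forall>i::int. 2 ^ l * d \<noteq> of_int i" if lN: "l \<le> N0" for l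
  proof (intro allI notI)
    fix i :: int assume h: "2 ^ l * d = of_int i"
    obtain r where "N0 = l + r" using le_Suc_ex[OF lN] by blast
    then have r: "N = l + Suc r" using N0 by simp
    have "real m = 2 ^ N * d" using dN by simp
    also have "\<dots> = 2 ^ Suc r * (2 ^ l * d)" unfolding r by (simp add: power_add)
    finally have "real m = of_int (2 ^ Suc r * i)" using h by simp
    then have "(of_int (int m) :: real) = of_int (2 ^ Suc r * i)" by simp
    then have "int m = 2 ^ Suc r * i" by (simp only: of_int_eq_iff)
    then have "even (int m)" by simp
    then show False using m by simp
  qed
  have ev1: "eventually (\<lambda>y. \<forall>l\<in>{..N0}. \<lceil>2^l * y\<rceil> = \<lceil>2^l * d\<rceil>) (at d within {d<..1})"
    by (intro eventually_ball_finite ballI level_ev) (use ni in auto)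
  have "continuous (at d within {d<..1}) R" by (rule continuous_within_subset[OF cont]) (use d in auto)
  then have ev2: "eventually (\<lambda>y. dist (R y) (R d) < eta) (at d within {d<..1})"
    using eta unfolding continuous_within tendsto_iff by blast
  have ev3: "eventually (\<lambda>y. y < d + 1 / 2 ^ N) (at d within {d<..1})"
    unfolding eventually_at by (intro exI[of _ "1 / 2 ^ N"]) (auto simp: dist_real_def)
  have "eventually (\<lambda>y. (\<forall>l\<in>{..N0}. \<lceil>2^l * y\<rceil> = \<lceil>2^l * d\<rceil>) \<and> dist (R y) (R d) < eta
      \<and> y < d + 1 / 2 ^ N) (at d within {d<..1})"
    using ev1 ev2 ev3 by eventually_elim auto
  then obtain del where del: "del > 0" "\<forall>y\<in>{d<..1}. y \<noteq> d \<and> dist y d < del \<longrightarrow>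
      (\<forall>l\<in>{..N0}. \<lceil>2^l * y\<rceil> = \<lceil>2^l * d\<rceil>) \<and> dist (R y) (R d) < eta \<and> y < d + 1 / 2 ^ N"
    unfolding eventually_at by blast
  define y where "y = d + min del (1 - d) / 2"
  have y: "d < y" "y \<le> 1" "dist y d < del" using del(1) d unfolding y_def by (auto simp: dist_real_def min_def field_simps)
  then have P: "\<forall>l\<in>{..N0}. \<lceil>2^l * y\<rceil> = \<lceil>2^l * d\<rceil>" "dist (R y) (R d) < eta" "y < d + 1 / 2 ^ N"
    using del(2) by auto
  have y1: "0 < y" "y \<le> 1" using y d by auto
  have infy: "infinite {n. bd y n}" using bd_val[OF y1] by simp
  have agree: "bd d j = bd y j" if "j < N0" for j
  proof -
    have "Suc j \<in> {..N0}" using that by simp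
    then have "\<lceil>2^Suc j * y\<rceil> = \<lceil>2^Suc j * d\<rceil>" using P(1) by blast
    then show ?thesis unfolding bd_def by simp
  qed
  have byN0: "bd y N0"
  proof -
    have "real m < 2 ^ N * y" using y(1) dN p by (metis mult_strict_left_mono)
    moreover have "2 ^ N * y < 2 ^ N * (d + 1 / 2 ^ N)" using P(3) p by (rule mult_strict_left_mono)
    then have "2 ^ N * y < real m + 1" using dN p by (simp add: algebra_simps)
    ultimately have "\<lceil>2 ^ N * y\<rceil> = int m + 1" by (intro ceiling_unique) auto
    then show ?thesis unfolding bd_def N0[symmetric] using m by simp
  qed
  have eyK: "enumerate {n. bd y n} K = N0"
  proof (rule enum_eq[OF infy])
    show "N0 \<in> {n. bd y n}" using byN0 by simp
    have "{j \<in> {n. bd y n}. j < N0} = {j \<in> {n. bd d n}. j < N}"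
      using agree nbN0 N0 by (auto simp: less_Suc_eq)
    then show "card {j \<in> {n. bd y n}. j < N0} = K" unfolding K_def by simp
  qed
  have agreeK: "rho (bd y) k = rho (bd d) k" if "k < K" for k
  proof -
    have "enumerate {n. bd d n} k < N" using eK that infd by (metis enumerate_mono)
    moreover have "enumerate {n. bd d n} k \<noteq> N0"
      using enumerate_in_set[OF infd, of k] nbN0 by auto
    ultimately have "enumerate {n. bd d n} k < N0" using N0 by simp
    then show ?thesis by (intro rho_prefix[where M=N0 and K=k, OF infd infy agree]) auto
  qed
  have rdK: "rho (bd d) K = odd N" and rdK2: "rho (bd d) (K + 2) = odd N"
    and ryK: "rho (bd y) K = odd N0"
    unfolding rho_def eK eK2 eyK by simp_all
  have RD: "R d = val (rho (bd d))" using R_val[OF d1] .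
  have RY: "R y = val (rho (bd y))" using R_val[OF y1] .
  show False
  proof (cases "odd N")
    case True
    then have "val (rho (bd d)) - val (rho (bd y)) \<ge> 1 / 2 ^ (K + 3)"
      by (intro val_gap) (use agreeK rdK rdK2 ryK N0 in auto)
    then show False using P(2) RD RY unfolding eta_def dist_real_def by linarith
  next
    case False
    then have "val (rho (bd y)) - val (rho (bd d)) \<ge> 1 / 2 ^ (K + 3)"
      by (intro val_gap) (use agreeK rdK rdK2 ryK N0 in auto)
    then show False using P(2) RD RY unfolding eta_def dist_real_def by linarith
  qed
qed



lemma cont_part1:
  assumes "x \<in> {0..1} - (dyadics - {1})"
  shows "continuous (at x within {0..1}) R"
proof (cases "x = 1")
  case True
  then show ?thesis by (intro R_cont) auto
next
  case False
  then have nd: "x \<notin> dyadics" "0 \<le> x" "x \<le> 1" using assms by auto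
  have "x \<noteq> 0" using nd unfolding dyadics_def by (auto intro!: exI[of _ 0])
  then have x: "0 < x" "x \<le> 1" using nd by auto
  have "\<forall>n::nat. \<forall>i::int. 2^n * x \<noteq> i"
  proof (intro allI notI)
    fix n :: nat and i :: int assume h: "2^n * x = i"
    then have "i \<ge> 0" using x by (smt (verit) of_int_less_0_iff zero_less_mult_iff zero_less_power)
    then have "x = real (nat i) / 2 ^ n" using h by (simp add: field_simps)
    then show False using nd unfolding dyadics_def by blast
  qed
  then show ?thesis by (intro R_cont x) auto
qed

lemma part2:
  assumes "x \<in> dyadics - {1}"
  shows "continuous (at x within {0..x}) R \<and> \<not> continuous (at x within {0..1}) R"
proof -
  from assms obtain m n where x: "x = real m / 2 ^ n" "0 \<le> x" "x < 1"
    unfolding dyadics_def by force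
  show ?thesis
  proof (cases "x = 0")
    case True
    have "trivial_limit (at x within {0..x})"
      unfolding trivial_limit_within using True by (auto simp: islimpt_def intro!: exI[of _ UNIV])
    then show ?thesis using True R_discont0 by (simp add: continuous_trivial_limit)
  next
    case False
    then have x0: "0 < x" using x by simp
    obtain m' N where o: "odd m'" "x = real m' / 2 ^ N"
      using odd_rep[OF x(1) x0] x by auto
    show ?thesis
      using R_cont[of x "{0..x}"] x x0 R_discont[OF x0 x(3) o(2) o(1)] by auto
  qed
qed

definition fa :: "nat \<Rightarrow> real \<Rightarrow> real" where
  "fa n x = (\<Sum>j\<in>{..(2::nat)^n}. R (real j / 2^n) * max 0 (1 - \<bar>2^n * x - real j\<bar>))"

lemma fa_cont: "continuous_on {0..1} (fa n)"
  unfolding fa_def by (intro continuous_intros)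

lemma sum_two:
  assumes "finite S" "a \<in> S" "b \<in> S" "a \<noteq> b" "\<And>j. j \<in> S \<Longrightarrow> j \<noteq> a \<Longrightarrow> j \<noteq> b \<Longrightarrow> g j = 0"
  shows "sum g S = g a + (g b :: real)"
proof -
  have "sum g S = sum g {a, b}"
    by (rule sum.mono_neutral_right) (use assms in auto)
  then show ?thesis using assms(4) by simp
qed

lemma fa_dyadic:
  assumes "x = real m / 2 ^ N" "x \<le> 1" "N \<le> n"
  shows "fa n x = R x"
proof -
  define j0 where "j0 = m * 2 ^ (n - N)"
  have e: "(2::real) ^ n = 2 ^ N * 2 ^ (n - N)" using assms(3) by (simp flip: power_add)
  have xj: "2 ^ n * x = real j0" unfolding j0_def assms(1) e by simp
  have "real j0 \<le> 2 ^ n" using xj assms(2) by (smt (verit) mult_left_le zero_le_power)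
  then have j0le: "j0 \<le> 2 ^ n" by (metis of_nat_le_iff of_nat_numeral of_nat_power)
  have "fa n x = (\<Sum>j\<in>{..(2::nat)^n}. if j = j0 then R x else 0)"
    unfolding fa_def
  proof (rule sum.cong[OF refl])
    fix j assume "j \<in> {..(2::nat)^n}"
    show "R (real j / 2^n) * max 0 (1 - \<bar>2^n * x - real j\<bar>) = (if j = j0 then R x else 0)"
    proof (cases "j = j0")
      case True
      then have "real j / 2^n = x" using xj by (simp add: field_simps)
      then show ?thesis using True xj by simp
    next
      case False
      then have "\<bar>real j0 - real j\<bar> \<ge> 1" by linarith
      then show ?thesis using False xj by simp
    qed
  qed
  also have "\<dots> = R x" using j0le by simp
  finally show ?thesis .
qed

lemma fa_nondyadic:
  fixes x :: real
  assumes x: "0 < x" "x < 1" and ni: "\<forall>i::int. 2^n * x \<noteq> i"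
  defines "a \<equiv> nat \<lfloor>2^n * x\<rfloor>"
  defines "t \<equiv> 2^n * x - real a"
  shows "fa n x = R (real a / 2^n) * (1 - t) + R (real (Suc a) / 2^n) * t"
    and "0 < t" "t < 1" "Suc a \<le> 2^n"
proof -
  have fl: "real_of_int \<lfloor>2^n * x\<rfloor> \<le> 2^n * x" "2^n * x < real_of_int \<lfloor>2^n * x\<rfloor> + 1" by linarith+
  have "\<lfloor>2^n * x\<rfloor> \<ge> 0" using x by simp
  then have ra: "real a = real_of_int \<lfloor>2^n * x\<rfloor>" unfolding a_def by simp
  have "2^n * x \<noteq> real_of_int \<lfloor>2^n * x\<rfloor>" using ni by blast
  then show t: "0 < t" "t < 1" unfolding t_def ra using fl by linarith+
  have "2^n * x < 2^n" using x by simp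
  then have "real a < 2^n" using t unfolding t_def by linarith
  then have "a < 2^n" by (metis of_nat_less_iff of_nat_numeral of_nat_power)
  then show sa: "Suc a \<le> 2^n" by simp
  let ?g = "\<lambda>j. R (real j / 2^n) * max 0 (1 - \<bar>2^n * x - real j\<bar>)"
  have "fa n x = ?g a + ?g (Suc a)"
    unfolding fa_def
  proof (rule sum_two)
    fix j assume "j \<in> {..(2::nat)^n}" "j \<noteq> a" "j \<noteq> Suc a"
    then have "j < a \<or> j > Suc a" by auto
    then have "\<bar>2^n * x - real j\<bar> \<ge> 1"
    proof
      assume "j < a" then have "real j + 1 \<le> real a" by linarith
      then show ?thesis using t unfolding t_def by linarith
    next
      assume "j > Suc a" then have "real j \<ge> real a + 2" by linarith
      then show ?thesis using t unfolding t_def by linarith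
    qed
    then show "?g j = 0" by simp
  qed (use sa in auto)
  moreover have "max 0 (1 - \<bar>2^n * x - real a\<bar>) = 1 - t" using t unfolding t_def by simp
  moreover have "max 0 (1 - \<bar>2^n * x - real (Suc a)\<bar>) = t" using t unfolding t_def by simp
  ultimately show "fa n x = R (real a / 2^n) * (1 - t) + R (real (Suc a) / 2^n) * t" by (simp add: t_def)
qed


lemma nondy:
  assumes "x \<in> {0..1}" "x \<notin> dyadics"
  shows "0 < x" "x < 1" "\<forall>n::nat. \<forall>i::int. 2^n * x \<noteq> i"
proof -
  have "x \<noteq> 0" using assms unfolding dyadics_def by (auto intro!: exI[of _ 0])
  moreover have "(1::real) \<in> dyadics" unfolding dyadics_def mem_Collect_eq
    by (intro conjI exI[of _ "1::nat"] exI[of _ "0::nat"]) simp_all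
  then have "x \<noteq> 1" using assms by auto
  ultimately show x: "0 < x" "x < 1" using assms by auto
  show "\<forall>n::nat. \<forall>i::int. 2^n * x \<noteq> i"
  proof (intro allI notI)
    fix n :: nat and i :: int assume h: "2^n * x = i"
    then have "i \<ge> 0" using x by (smt (verit) of_int_less_0_iff zero_less_mult_iff zero_less_power)
    then have "x = real (nat i) / 2 ^ n" using h by (simp add: field_simps)
    then have "x \<in> dyadics" unfolding dyadics_def mem_Collect_eq
      by (intro conjI exI[of _ "nat i"] exI[of _ n]) (use assms(1) in auto)
    then show False using assms(2) by blast
  qed
qed

lemma fa_lim:
  assumes xI: "x \<in> {0..1}"
  shows "(\<lambda>n. fa n x) \<longlonglongrightarrow> R x"
proof (cases "x \<in> dyadics")
  case True
  then obtain m N where x: "x = real m / 2 ^ N" "x \<le> 1" unfolding dyadics_def by auto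
  have "eventually (\<lambda>n. fa n x = R x) sequentially"
    unfolding eventually_sequentially by (intro exI[of _ N] allI impI fa_dyadic[OF x])
  then show ?thesis by (rule tendsto_eventually)
next
  case False
  note nd = nondy[OF xI False]
  have cont: "continuous (at x within {0..1}) R" using cont_part1 xI False by auto
  show ?thesis unfolding tendsto_iff
  proof (intro allI impI)
    fix e :: real assume e: "e > 0"
    obtain d where d: "d > 0" "\<forall>y\<in>{0..1}. dist y x < d \<longrightarrow> dist (R y) (R x) < e"
      using cont_eps[OF cont e] by auto
    obtain N where N: "(1/2::real)^N < d" using real_arch_pow_inv[OF d(1), of "1/2"] by auto
    show "eventually (\<lambda>n. dist (fa n x) (R x) < e) sequentially"
      unfolding eventually_sequentially
    proof (intro exI[of _ N] allI impI)
      fix n assume nN: "N \<le> n"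
      define a where "a = nat \<lfloor>2^n * x\<rfloor>"
      define t where "t = 2^n * x - real a"
      have fx: "fa n x = R (real a / 2^n) * (1 - t) + R (real (Suc a) / 2^n) * t"
        and t: "0 < t" "t < 1" and sa: "Suc a \<le> 2^n"
        using fa_nondyadic[OF nd(1,2), of n] nd(3) unfolding a_def t_def by auto
      have p: "(0::real) < 2^n" by simp
      have small: "1 / 2^n < d"
      proof -
        have "(1::real) / 2^n \<le> 1 / 2^N" using nN by (simp add: field_simps)
        then show ?thesis using N by (simp add: power_divide)
      qed
      have p1: "real a / 2^n = x - t / 2^n" using p unfolding t_def by (simp add: field_simps)
      have p2: "real (Suc a) / 2^n = x + (1 - t) / 2^n" using p unfolding t_def by (simp add: field_simps)
      have "t / 2^n < 1 / 2^n" "(1 - t) / 2^n < 1 / 2^n" using t p by (auto simp: divide_strict_right_mono)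
      moreover have "0 \<le> t / 2^n" "0 \<le> (1 - t) / 2^n" using t by auto
      ultimately have dd: "dist (real a / 2^n) x < d" "dist (real (Suc a) / 2^n) x < d"
        unfolding p1 p2 dist_real_def using small by auto
      have sa': "real (Suc a) \<le> 2^n" using sa by (metis of_nat_le_iff of_nat_numeral of_nat_power)
      then have in2: "real (Suc a) / 2^n \<in> {0..1}" by simp
      have "real a \<le> 2^n" using sa' by linarith
      then have in1: "real a / 2^n \<in> {0..1}" by simp
      have A: "\<bar>R (real a / 2^n) - R x\<bar> < e" using d(2) in1 dd(1) by (auto simp: dist_real_def)
      have B: "\<bar>R (real (Suc a) / 2^n) - R x\<bar> < e" using d(2) in2 dd(2) by (auto simp: dist_real_def)
      have "fa n x - R x = (1 - t) * (R (real a / 2^n) - R x) + t * (R (real (Suc a) / 2^n) - R x)"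
        unfolding fx by (simp add: algebra_simps)
      also have "\<bar>\<dots>\<bar> \<le> (1 - t) * \<bar>R (real a / 2^n) - R x\<bar> + t * \<bar>R (real (Suc a) / 2^n) - R x\<bar>"
        using t by (simp add: abs_mult order.trans[OF abs_triangle_ineq])
      also have "\<dots> < (1 - t) * e + t * e"
        using t A B by (intro add_le_less_mono mult_left_mono mult_strict_left_mono) auto
      also have "\<dots> = e" by (simp add: algebra_simps)
      finally show "dist (fa n x) (R x) < e" by (simp add: dist_real_def)
    qed
  qed
qed

theorem proposition3p1:
  shows "(\<forall>x \<in> {0..1} - (dyadics - {1}). continuous (at x within {0..1}) R)
    \<and> (\<forall>x \<in> dyadics - {1}. continuous (at x within {0..x}) R
                             \<and> \<not> continuous (at x within {0..1}) R)
    \<and> R \<in> borel_measurable (restrict_space borel {0..1})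
    \<and> (\<exists>f :: nat \<Rightarrow> real \<Rightarrow> real. (\<forall>n. continuous_on {0..1} (f n))
          \<and> (\<forall>x \<in> {0..1}. (\<lambda>n. f n x) \<longlonglongrightarrow> R x))"
proof (intro conjI)
  show "\<forall>x \<in> {0..1} - (dyadics - {1}). continuous (at x within {0..1}) R"
    using cont_part1 by blast
  show "\<forall>x \<in> dyadics - {1}. continuous (at x within {0..x}) R \<and> \<not> continuous (at x within {0..1}) R"
    using part2 by blast
  show "R \<in> borel_measurable (restrict_space borel {0..1})"
  proof (rule borel_measurable_LIMSEQ_metric[of fa])
    show "fa i \<in> borel_measurable (restrict_space borel {0..1})" for i
      by (rule borel_measurable_continuous_on_restrict[OF fa_cont])
    show "(\<lambda>i. fa i x) \<longlonglongrightarrow> R x" if "x \<in> space (restrict_space borel {0..1})" for x :: real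
      using that fa_lim by simp
  qed
  show "\<exists>f :: nat \<Rightarrow> real \<Rightarrow> real. (\<forall>n. continuous_on {0..1} (f n))
          \<and> (\<forall>x \<in> {0..1}. (\<lambda>n. f n x) \<longlonglongrightarrow> R x)"
    using fa_cont fa_lim by blast
qed


end
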